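(* Let $A,B,C$ be three non-collinear points in the plane such that the angle $\angle BAC$ is not obtuse (i.e. $0<\angle BAC\le \pi/2$). Consider all rectangles $R$ having $A$ as a vertex such that one of the two sides of $R$ not containing $A$ contains $B$ and the other side of $R$ not containing $A$ contains $C$. Among these rectangles, the minimal area is attained by a rectangle one of whose sides is the segment $AB$ or the segment $AC$. *)

theory Defs
  imports "HOL-Analysis.Analysis"
begin

definition angle_at :: "real^2 \<Rightarrow> real^2 \<Rightarrow> real^2 \<Rightarrow> real" where
  "angle_at B A C = arccos (((B - A) \<bullet> (C - A)) / (norm (B - A) * norm (C - A)))"

text \<open>A rectangle with vertex A is given by its two vertices P, Q adjacent to A
  (non-degenerate, with AP perpendicular to AQ); its fourth vertex is P + Q - A.\<close>
definition rect_at :: "real^2 \<Rightarrow> real^2 \<Rightarrow> real^2 \<Rightarrow> bool" where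
  "rect_at A P Q \<longleftrightarrow> P \<noteq> A \<and> Q \<noteq> A \<and> (P - A) \<bullet> (Q - A) = 0"

definition rect_area :: "real^2 \<Rightarrow> real^2 \<Rightarrow> real^2 \<Rightarrow> real" where
  "rect_area A P Q = norm (P - A) * norm (Q - A)"

definition admissible :: "real^2 \<Rightarrow> real^2 \<Rightarrow> real^2 \<Rightarrow> real^2 \<Rightarrow> real^2 \<Rightarrow> bool" where
  "admissible A B C P Q \<longleftrightarrow> rect_at A P Q \<and>
     ((B \<in> closed_segment P (P + Q - A) \<and> C \<in> closed_segment Q (P + Q - A)) \<or>
      (C \<in> closed_segment P (P + Q - A) \<and> B \<in> closed_segment Q (P + Q - A)))"

end

theory Submission
  imports Defs
begin

definition cr :: "real^2 \<Rightarrow> real^2 \<Rightarrow> real" where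
  "cr x y = x$1 * y$2 - x$2 * y$1"

lemma inner2: "(x::real^2) \<bullet> y = x$1 * y$1 + x$2 * y$2"
  by (simp add: inner_vec_def sum_2)

lemma normsq2: "(norm (x::real^2))^2 = x$1 * x$1 + x$2 * x$2"
  by (simp add: power2_norm_eq_inner inner2)

lemma lagrange: "(norm (p::real^2) * norm q)^2 = (cr p q)^2 + (p \<bullet> q)^2"
  unfolding power_mult_distrib normsq2 by (simp add: inner2 cr_def power2_eq_square algebra_simps)

lemma area_eq: assumes "p \<bullet> q = 0" shows "norm (p::real^2) * norm q = \<bar>cr p q\<bar>"
proof -
  have "(norm p * norm q)^2 = (\<bar>cr p q\<bar>)^2" using lagrange[of p q] assms by simp
  then show ?thesis by (subst (asm) power2_eq_iff_nonneg) auto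
qed

lemma seg_decomp:
  assumes "X \<in> closed_segment P (P + Q - A)"
  obtains s where "0 \<le> s" "s \<le> 1" "X - A = (P - A) + s *\<^sub>R (Q - A)"
proof -
  obtain s where s: "0 \<le> s" "s \<le> 1" "X = (1 - s) *\<^sub>R P + s *\<^sub>R (P + Q - A)"
    using assms by (auto simp: in_segment)
  have "X - A = (P - A) + s *\<^sub>R (Q - A)" using s(3) by (simp add: algebra_simps)
  then show ?thesis using that s by blast
qed

lemma cr_comb: "cr (p + s *\<^sub>R q) (q + t *\<^sub>R p) = cr p q * (1 - s * t)"
  by (simp add: cr_def algebra_simps)

lemma lower:
  assumes "admissible A B C P Q"
  shows "\<bar>cr (B - A) (C - A)\<bar> \<le> rect_area A P Q"
proof -
  let ?p = "P - A" and ?q = "Q - A"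
  have orth: "?p \<bullet> ?q = 0" using assms by (simp add: admissible_def rect_at_def)
  have ar: "rect_area A P Q = \<bar>cr ?p ?q\<bar>" using area_eq[OF orth] by (simp add: rect_area_def)
  have key: "\<And>s t. 0 \<le> s \<Longrightarrow> s \<le> 1 \<Longrightarrow> 0 \<le> t \<Longrightarrow> t \<le> 1 \<Longrightarrow>
      \<bar>cr ?p ?q * (1 - s * t)\<bar> \<le> \<bar>cr ?p ?q\<bar>"
  proof -
    fix s t :: real assume "0 \<le> s" "s \<le> 1" "0 \<le> t" "t \<le> 1"
    then have "0 \<le> s * t" "s * t \<le> 1" by (auto simp: mult_le_one)
    then have "\<bar>1 - s * t\<bar> \<le> 1" by auto
    then show "\<bar>cr ?p ?q * (1 - s * t)\<bar> \<le> \<bar>cr ?p ?q\<bar>"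
      by (simp add: abs_mult mult_left_le)
  qed
  have anti: "cr x y = - cr y x" for x y by (simp add: cr_def)
  from assms consider
      "B \<in> closed_segment P (P + Q - A)" "C \<in> closed_segment Q (P + Q - A)"
    | "C \<in> closed_segment P (P + Q - A)" "B \<in> closed_segment Q (P + Q - A)"
    by (auto simp: admissible_def)
  then show ?thesis
  proof cases
    case 1
    obtain s where s: "0 \<le> s" "s \<le> 1" "B - A = ?p + s *\<^sub>R ?q" using seg_decomp[OF 1(1)] by blast
    have "C \<in> closed_segment Q (Q + P - A)" using 1(2) by (simp add: algebra_simps)
    then obtain t where t: "0 \<le> t" "t \<le> 1" "C - A = ?q + t *\<^sub>R ?p" using seg_decomp by blast
    show ?thesis using key[OF s(1,2) t(1,2)] unfolding ar s(3) t(3) cr_comb .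
  next
    case 2
    obtain s where s: "0 \<le> s" "s \<le> 1" "C - A = ?p + s *\<^sub>R ?q" using seg_decomp[OF 2(1)] by blast
    have "B \<in> closed_segment Q (Q + P - A)" using 2(2) by (simp add: algebra_simps)
    then obtain t where t: "0 \<le> t" "t \<le> 1" "B - A = ?q + t *\<^sub>R ?p" using seg_decomp by blast
    have "\<bar>cr (B - A) (C - A)\<bar> = \<bar>cr ?p ?q * (1 - t * s)\<bar>"
      unfolding s(3) t(3) by (simp add: cr_def algebra_simps)
    then show ?thesis using key[OF t(1,2) s(1,2)] ar by (simp add: mult.commute)
  qed
qed

lemma constr:
  assumes nz: "cr (B - A) (C - A) \<noteq> 0"
    and h0: "0 \<le> (B - A) \<bullet> (C - A)" and h1: "(B - A) \<bullet> (C - A) \<le> (B - A) \<bullet> (B - A)"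
  shows "\<exists>Q. admissible A B C B Q \<and> rect_area A B Q = \<bar>cr (B - A) (C - A)\<bar>"
proof -
  define u where "u = B - A"
  define v where "v = C - A"
  have unz: "u \<noteq> 0" using nz by (auto simp: u_def cr_def)
  then have uu: "u \<bullet> u > 0" by simp
  define k where "k = (u \<bullet> v) / (u \<bullet> u)"
  have k0: "0 \<le> k" and k1: "k \<le> 1" using h0 h1 uu by (auto simp: k_def u_def v_def)
  define q where "q = v - k *\<^sub>R u"
  define Q where "Q = A + q"
  have uq: "u \<bullet> q = 0" using uu by (simp add: q_def k_def inner_diff_right)
  have crq: "cr u q = cr u v" by (simp add: q_def cr_def algebra_simps)
  have qnz: "q \<noteq> 0" using nz crq by (auto simp: u_def v_def cr_def)
  have rect: "rect_at A B Q" using unz qnz uq by (simp add: rect_at_def Q_def u_def)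
  have "B \<in> closed_segment B (B + Q - A)" by simp
  moreover have "C \<in> closed_segment Q (B + Q - A)"
    unfolding in_segment
    by (rule exI[of _ k]) (use k0 k1 in \<open>simp add: Q_def q_def u_def v_def algebra_simps\<close>)
  ultimately have "admissible A B C B Q" using rect by (simp add: admissible_def)
  moreover have "rect_area A B Q = \<bar>cr (B - A) (C - A)\<bar>"
    using area_eq[OF uq] crq by (simp add: rect_area_def Q_def u_def v_def)
  ultimately show ?thesis by blast
qed

lemma adm_sym: "admissible A B C P Q \<Longrightarrow> admissible A C B P Q"
  by (auto simp: admissible_def)

theorem lemma1:
  fixes A B C :: "real^2"
  assumes "\<not> collinear {A, B, C}"
    and "0 < angle_at B A C" and "angle_at B A C \<le> pi / 2"
  shows "\<exists>P Q. admissible A B C P Q \<and>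
           (\<forall>P' Q'. admissible A B C P' Q' \<longrightarrow> rect_area A P Q \<le> rect_area A P' Q') \<and>
           (closed_segment A P = closed_segment A B \<or> closed_segment A Q = closed_segment A B \<or>
            closed_segment A P = closed_segment A C \<or> closed_segment A Q = closed_segment A C)"
proof -
  define u where "u = B - A"
  define v where "v = C - A"
  have col: "collinear {A, B, C} = collinear {0, u, v}"
    using collinear_3[of B A C] by (simp add: insert_commute u_def v_def)
  have nz: "cr u v \<noteq> 0"
  proof
    assume c: "cr u v = 0"
    have "collinear {0, u, v}"
    proof (cases "u = 0")
      case True then show ?thesis by (simp add: collinear_lemma)
    next
      case False
      then have "u$1 \<noteq> 0 \<or> u$2 \<noteq> 0" by (auto simp: vec_eq_iff forall_2)
      then show ?thesis
      proof
        assume h: "u$1 \<noteq> 0"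
        have "v = (v$1 / u$1) *\<^sub>R u" using h c
          by (auto simp: vec_eq_iff forall_2 cr_def field_simps)
        then show ?thesis unfolding collinear_lemma by blast
      next
        assume h: "u$2 \<noteq> 0"
        have "v = (v$2 / u$2) *\<^sub>R u" using h c
          by (auto simp: vec_eq_iff forall_2 cr_def field_simps)
        then show ?thesis unfolding collinear_lemma by blast
      qed
    qed
    then show False using assms(1) col by simp
  qed
  have unz: "u \<noteq> 0" and vnz: "v \<noteq> 0" using nz by (auto simp: cr_def)
  have uv0: "0 \<le> u \<bullet> v"
  proof (rule ccontr)
    assume "\<not> 0 \<le> u \<bullet> v"
    then have neg: "u \<bullet> v < 0" by simp
    have np: "norm u * norm v > 0" using unz vnz by simp
    let ?x = "(u \<bullet> v) / (norm u * norm v)"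
    have "\<bar>u \<bullet> v\<bar> \<le> norm u * norm v" by (rule Cauchy_Schwarz_ineq2)
    then have "-1 \<le> ?x" using np by (simp add: field_simps)
    moreover have "?x < 0" using neg np by (simp add: divide_neg_pos)
    ultimately have "arccos 0 < arccos ?x" by (intro arccos_less_arccos) auto
    then have "pi / 2 < angle_at B A C" by (simp add: angle_at_def u_def v_def)
    then show False using assms(3) by simp
  qed
  have "u \<bullet> v \<le> u \<bullet> u \<or> u \<bullet> v \<le> v \<bullet> v"
  proof (rule ccontr)
    assume "\<not> ?thesis"
    then have a: "u \<bullet> u < u \<bullet> v" "v \<bullet> v < u \<bullet> v" by auto
    have "(u \<bullet> u) * (v \<bullet> v) < (u \<bullet> v) * (u \<bullet> v)"
      using a uv0 by (intro mult_strict_mono) (auto intro: order.strict_trans1[OF inner_ge_zero])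
    moreover have "(u \<bullet> v) * (u \<bullet> v) \<le> (u \<bullet> u) * (v \<bullet> v)"
      using Cauchy_Schwarz_ineq[of u v] by (simp add: power2_eq_square)
    ultimately show False by simp
  qed
  then show ?thesis
  proof
    assume h: "u \<bullet> v \<le> u \<bullet> u"
    obtain Q where Q: "admissible A B C B Q" "rect_area A B Q = \<bar>cr (B - A) (C - A)\<bar>"
      using constr[of B A C] nz uv0 h by (auto simp: u_def v_def)
    show ?thesis
      by (rule exI[of _ B], rule exI[of _ Q]) (use Q lower in auto)
  next
    assume h: "u \<bullet> v \<le> v \<bullet> v"
    have crs: "\<bar>cr v u\<bar> = \<bar>cr u v\<bar>" by (simp add: cr_def abs_minus_commute mult.commute)
    obtain Q where Q: "admissible A C B C Q" "rect_area A C Q = \<bar>cr (C - A) (B - A)\<bar>"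
    proof -
      have c1: "cr (C - A) (B - A) \<noteq> 0" using nz by (auto simp: u_def v_def cr_def mult.commute)
      have c2: "0 \<le> (C - A) \<bullet> (B - A)" using uv0 by (simp add: u_def v_def inner_commute)
      have c3: "(C - A) \<bullet> (B - A) \<le> (C - A) \<bullet> (C - A)" using h by (simp add: u_def v_def inner_commute)
      show ?thesis using constr[OF c1 c2 c3] that by blast
    qed
    have Q1: "admissible A B C C Q" using adm_sym[OF Q(1)] .
    have Q2: "rect_area A C Q = \<bar>cr (B - A) (C - A)\<bar>" using Q(2) crs by (simp add: u_def v_def)
    show ?thesis
      by (rule exI[of _ C], rule exI[of _ Q]) (use Q1 Q2 lower in auto)
  qed
qed

end
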